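(* Let $X$, $Y$ be disjoint sets of cardinality at least two, $M\le\mathrm{Sym}(X)$ and $N\le\mathrm{Sym}(Y)$ nontrivial permutation groups, $T$ the $(|X|,|Y|)$-biregular tree and $c$ a legal colouring. If $m$ (resp. $n$) denotes the number of orbits of $M$ (resp. $N$), then the quotient $U_c(M,N)\backslash T$ is the complete bipartite graph $K_{m,n}$.
   Context: $T$ has natural bipartition $VT=V_X\sqcup V_Y$ (vertices in $V_X$ have valency $|X|$, in $V_Y$ valency $|Y|$). $A(v)$, $\overline{A}(v)$ are the sets of arcs with origin, resp. terminus, $v$. A legal colouring is a map $c:AT\to X\cup Y$ restricting to a bijection $A(v)\to X$ for $v\in V_X$, to a bijection $A(v)\to Y$ for $v\in V_Y$, and constant on each $\overline{A}(v)$. $U_c(M,N)$ is the group of $g\in\mathrm{Aut}(T)$ with $gV_X=V_X$ and $c|_{A(gv)}\circ g|_{A(v)}\circ(c|_{A(v)})^{-1}$ in $M$ for $v\in V_X$ and in $N$ for $v\in V_Y$. For a group $G$ acting on a tree without inversion, the quotient $G\backslash T$ is the (multi)graph whose vertices are the $G$-orbits on $VT$ and whose edges are the $G$-orbits on edges of $T$, an edge-orbit being incident to the vertex-orbits containing its endpoints. *)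

theory Defs
  imports "HOL-Algebra.Bij" "HOL-Library.Equipollence"
begin

definition simple_graph :: "'v set \<Rightarrow> ('v \<Rightarrow> 'v \<Rightarrow> bool) \<Rightarrow> bool" where
  "simple_graph VT E \<longleftrightarrow>
     (\<forall>u w. E u w \<longrightarrow> u \<in> VT \<and> w \<in> VT) \<and>
     (\<forall>u w. E u w \<longrightarrow> E w u) \<and> (\<forall>u. \<not> E u u)"

definition connected_graph :: "'v set \<Rightarrow> ('v \<Rightarrow> 'v \<Rightarrow> bool) \<Rightarrow> bool" where
  "connected_graph VT E \<longleftrightarrow> (\<forall>u\<in>VT. \<forall>w\<in>VT. E\<^sup>*\<^sup>* u w)"

definition is_cycle :: "('v \<Rightarrow> 'v \<Rightarrow> bool) \<Rightarrow> 'v list \<Rightarrow> bool" where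
  "is_cycle E xs \<longleftrightarrow> length xs \<ge> 3 \<and> distinct xs \<and>
     (\<forall>i. Suc i < length xs \<longrightarrow> E (xs ! i) (xs ! Suc i)) \<and> E (last xs) (hd xs)"

definition is_tree :: "'v set \<Rightarrow> ('v \<Rightarrow> 'v \<Rightarrow> bool) \<Rightarrow> bool" where
  "is_tree VT E \<longleftrightarrow> simple_graph VT E \<and> connected_graph VT E \<and>
     VT \<noteq> {} \<and> (\<nexists>xs. is_cycle E xs)"

definition neighbours :: "('v \<Rightarrow> 'v \<Rightarrow> bool) \<Rightarrow> 'v \<Rightarrow> 'v set" where
  "neighbours E v = {w. E v w}"

definition biregular_tree ::
  "'v set \<Rightarrow> ('v \<Rightarrow> 'v \<Rightarrow> bool) \<Rightarrow> 'v set \<Rightarrow> 'v set \<Rightarrow> 'c set \<Rightarrow> 'c set \<Rightarrow> bool" where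
  "biregular_tree VT E VX VY X Y \<longleftrightarrow> is_tree VT E \<and>
     VX \<union> VY = VT \<and> VX \<inter> VY = {} \<and>
     (\<forall>u w. E u w \<longrightarrow> (u \<in> VX \<longleftrightarrow> w \<in> VY)) \<and>
     (\<forall>v\<in>VX. neighbours E v \<approx> X) \<and> (\<forall>v\<in>VY. neighbours E v \<approx> Y)"

definition arcs_from :: "('v \<Rightarrow> 'v \<Rightarrow> bool) \<Rightarrow> 'v \<Rightarrow> ('v \<times> 'v) set" where
  "arcs_from E v = {(v, w) | w. E v w}"

definition arcs_to :: "('v \<Rightarrow> 'v \<Rightarrow> bool) \<Rightarrow> 'v \<Rightarrow> ('v \<times> 'v) set" where
  "arcs_to E v = {(u, v) | u. E u v}"

definition legal_colouring ::
  "'v set \<Rightarrow> ('v \<Rightarrow> 'v \<Rightarrow> bool) \<Rightarrow> 'v set \<Rightarrow> 'v set \<Rightarrow> 'c set \<Rightarrow> 'c set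
     \<Rightarrow> ('v \<times> 'v \<Rightarrow> 'c) \<Rightarrow> bool" where
  "legal_colouring VT E VX VY X Y c \<longleftrightarrow>
     (\<forall>v\<in>VX. bij_betw c (arcs_from E v) X) \<and>
     (\<forall>v\<in>VY. bij_betw c (arcs_from E v) Y) \<and>
     (\<forall>v\<in>VT. \<forall>a\<in>arcs_to E v. \<forall>b\<in>arcs_to E v. c a = c b)"

definition tree_aut :: "'v set \<Rightarrow> ('v \<Rightarrow> 'v \<Rightarrow> bool) \<Rightarrow> ('v \<Rightarrow> 'v) set" where
  "tree_aut VT E = {g \<in> Bij VT. \<forall>u\<in>VT. \<forall>w\<in>VT. E u w \<longleftrightarrow> E (g u) (g w)}"

text \<open>The local action  c|A(gv) o g|A(v) o (c|A(v))^{-1},  a permutation of S.\<close>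
definition local_action ::
  "('v \<Rightarrow> 'v \<Rightarrow> bool) \<Rightarrow> ('v \<times> 'v \<Rightarrow> 'c) \<Rightarrow> ('v \<Rightarrow> 'v) \<Rightarrow> 'v \<Rightarrow> 'c set \<Rightarrow> ('c \<Rightarrow> 'c)" where
  "local_action E c g v S =
     (\<lambda>x\<in>S. let a = the_inv_into (arcs_from E v) c x in c (g (fst a), g (snd a)))"

definition U_c ::
  "'v set \<Rightarrow> ('v \<Rightarrow> 'v \<Rightarrow> bool) \<Rightarrow> 'v set \<Rightarrow> 'v set \<Rightarrow> 'c set \<Rightarrow> 'c set
     \<Rightarrow> ('v \<times> 'v \<Rightarrow> 'c) \<Rightarrow> ('c \<Rightarrow> 'c) set \<Rightarrow> ('c \<Rightarrow> 'c) set \<Rightarrow> ('v \<Rightarrow> 'v) set" where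
  "U_c VT E VX VY X Y c M N =
     {g \<in> tree_aut VT E. g ` VX = VX \<and>
        (\<forall>v\<in>VX. local_action E c g v X \<in> M) \<and>
        (\<forall>v\<in>VY. local_action E c g v Y \<in> N)}"

definition perm_orbits :: "('a \<Rightarrow> 'a) set \<Rightarrow> 'a set \<Rightarrow> 'a set set" where
  "perm_orbits G S = (\<lambda>x. {g x | g. g \<in> G}) ` S"

definition tree_edges :: "'v set \<Rightarrow> ('v \<Rightarrow> 'v \<Rightarrow> bool) \<Rightarrow> 'v set set" where
  "tree_edges VT E = {{u, w} | u w. u \<in> VT \<and> w \<in> VT \<and> E u w}"

definition quot_vertices :: "('v \<Rightarrow> 'v) set \<Rightarrow> 'v set \<Rightarrow> 'v set set" where
  "quot_vertices G VT = perm_orbits G VT"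

definition quot_edges ::
  "('v \<Rightarrow> 'v) set \<Rightarrow> 'v set \<Rightarrow> ('v \<Rightarrow> 'v \<Rightarrow> bool) \<Rightarrow> 'v set set set" where
  "quot_edges G VT E = (\<lambda>e. {g ` e | g. g \<in> G}) ` tree_edges VT E"

definition quot_incident :: "'v set set \<Rightarrow> 'v set \<Rightarrow> bool" where
  "quot_incident eo Ov \<longleftrightarrow> (\<exists>e\<in>eo. e \<inter> Ov \<noteq> {})"

definition complete_bipartite_on ::
  "'a set \<Rightarrow> 'b set \<Rightarrow> ('b \<Rightarrow> 'a \<Rightarrow> bool) \<Rightarrow> 'a set \<Rightarrow> 'a set \<Rightarrow> bool" where
  "complete_bipartite_on V Ed inc P Q \<longleftrightarrow>
     P \<union> Q = V \<and> P \<inter> Q = {} \<and>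
     (\<forall>e\<in>Ed. \<exists>p\<in>P. \<exists>q\<in>Q. {x \<in> V. inc e x} = {p, q}) \<and>
     (\<forall>p\<in>P. \<forall>q\<in>Q. \<exists>!e. e \<in> Ed \<and> inc e p \<and> inc e q)"

text \<open>The multigraph is K_{m,n} where m, n are the cardinalities of the sets A, B.\<close>
definition is_K ::
  "'a set \<Rightarrow> 'b set \<Rightarrow> ('b \<Rightarrow> 'a \<Rightarrow> bool) \<Rightarrow> 'x set \<Rightarrow> 'y set \<Rightarrow> bool" where
  "is_K V Ed inc A B \<longleftrightarrow>
     (\<exists>P Q. complete_bipartite_on V Ed inc P Q \<and> P \<approx> A \<and> Q \<approx> B)"

end

theory Submission
  imports Defs
begin


definition walkp :: "('v\<Rightarrow>'v\<Rightarrow>bool) \<Rightarrow> 'v list \<Rightarrow> bool" where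
  "walkp E xs \<longleftrightarrow> xs \<noteq> [] \<and> successively E xs"

fun nobt :: "'v list \<Rightarrow> bool" where
  "nobt (x#y#z#zs) = (x \<noteq> z \<and> nobt (y#z#zs))" | "nobt _ = True"

lemma successively_nth:
  "successively P xs \<longleftrightarrow> (\<forall>i. Suc i < length xs \<longrightarrow> P (xs!i) (xs!Suc i))"
proof (induction P xs rule: successively.induct)
  case (3 P x y xs)
  show ?case
    unfolding successively.simps 3
    by (auto simp: nth_Cons split: nat.splits)
qed auto

lemma nobt_nth:
  "nobt xs \<longleftrightarrow> (\<forall>i. Suc (Suc i) < length xs \<longrightarrow> xs!i \<noteq> xs!Suc (Suc i))"
proof (induction xs rule: nobt.induct)
  case (1 x y z zs)
  show ?case
    unfolding nobt.simps 1
    by (auto simp: nth_Cons split: nat.splits)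
next
  case ("2_1") then show ?case by simp
next
  case ("2_2" v) then show ?case by simp
next
  case ("2_3" v va) then show ?case by simp
qed

lemma nobt_rev: "nobt (rev xs) = nobt xs"
proof -
  have "nobt xs" if "nobt (rev xs)" for xs :: "'a list"
    unfolding nobt_nth
  proof (intro allI impI)
    fix i assume i: "Suc (Suc i) < length xs"
    let ?j = "length xs - Suc (Suc (Suc i))"
    have "rev xs ! ?j \<noteq> rev xs ! Suc (Suc ?j)" using that i unfolding nobt_nth by auto
    moreover have "rev xs ! ?j = xs ! Suc (Suc i)" using i by (simp add: rev_nth)
    moreover have "rev xs ! Suc (Suc ?j) = xs ! i" using i
      by (simp add: rev_nth Suc_diff_Suc)
    ultimately show "xs!i \<noteq> xs!Suc (Suc i)" by simp
  qed
  from this[of xs] this[of "rev xs"] show ?thesis by auto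
qed

lemma nobt_appendD1: "nobt (xs @ ys) \<Longrightarrow> nobt xs"
  unfolding nobt_nth
proof (intro allI impI)
  fix i assume a: "\<forall>i. Suc (Suc i) < length (xs @ ys) \<longrightarrow> (xs @ ys) ! i \<noteq> (xs @ ys) ! Suc (Suc i)"
    and i: "Suc (Suc i) < length xs"
  then have "(xs @ ys) ! i \<noteq> (xs @ ys) ! Suc (Suc i)" by simp
  then show "xs ! i \<noteq> xs ! Suc (Suc i)" using i by (simp add: nth_append)
qed

lemma nobt_appendD2: "nobt (xs @ ys) \<Longrightarrow> nobt ys"
  using nobt_appendD1[of "rev ys" "rev xs"] by (simp add: nobt_rev flip: rev_append)

lemma nobt_Cons2: "nobt (x#y#zs) \<longleftrightarrow> (zs = [] \<or> x \<noteq> hd zs) \<and> nobt (y#zs)"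
  by (cases zs) auto

lemma nobt_append:
  "nobt (xs @ y1 # y2 # ys) \<longleftrightarrow> nobt (xs @ [y1,y2]) \<and> nobt (y1#y2#ys)"
proof (induction xs rule: nobt.induct)
  case (1 x y z zs)
  then show ?case by auto
next
  case ("2_1") then show ?case by simp
next
  case ("2_2" v) then show ?case by simp
next
  case ("2_3" v va) then show ?case by simp
qed

lemma not_nobt: "\<not> nobt xs \<Longrightarrow> \<exists>p u w q. xs = p @ u # w # u # q"
proof (induction xs rule: nobt.induct)
  case (1 x y z zs)
  show ?case
  proof (cases "x = z")
    case True then show ?thesis by (metis append_Nil)
  next
    case False
    then have "\<not> nobt (y#z#zs)" using 1(2) by simp
    then obtain p u w q where "y#z#zs = p @ u # w # u # q" using 1(1) by blast
    then have "x#y#z#zs = (x#p) @ u # w # u # q" by simp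
    then show ?thesis by blast
  qed
qed auto

lemma walkp_append: "walkp E (xs @ ys) \<longleftrightarrow>
   (xs = [] \<and> walkp E ys) \<or> (ys = [] \<and> walkp E xs) \<or> (walkp E xs \<and> walkp E ys \<and> E (last xs) (hd ys))"
  unfolding walkp_def successively_append_iff by auto

lemma closed_walk:
  assumes sg: "simple_graph VT E" and nc: "\<nexists>xs. is_cycle E xs"
  shows "walkp E xs \<Longrightarrow> nobt xs \<Longrightarrow> length xs \<ge> 2 \<Longrightarrow> hd xs = last xs \<Longrightarrow> False"
proof (induction "length xs" arbitrary: xs rule: less_induct)
  case less
  have irr: "\<not> E u u" for u using sg unfolding simple_graph_def by auto
  have sx: "\<forall>i. Suc i < length xs \<longrightarrow> E (xs!i) (xs!Suc i)"
    using less.prems(1) unfolding walkp_def successively_nth by auto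
  show False
  proof (cases "distinct (butlast xs)")
    case True
    have l4: "length xs \<ge> 4"
    proof (rule ccontr)
      assume "\<not> ?thesis"
      then have "length xs = 2 \<or> length xs = 3" using less.prems(3) by auto
      then show False
      proof
        assume "length xs = 2"
        then obtain a b where "xs = [a,b]" by (metis (no_types, lifting) One_nat_def Suc_1 length_0_conv length_Suc_conv)
        then show False using less.prems irr unfolding walkp_def by auto
      next
        assume "length xs = 3"
        then obtain a b d where "xs = [a,b,d]"
          by (metis (no_types, lifting) length_0_conv length_Suc_conv numeral_3_eq_3)
        then show False using less.prems by auto
      qed
    qed
    let ?bl = "butlast xs"
    have "is_cycle E ?bl"
      unfolding is_cycle_def
    proof (intro conjI allI impI)
      show "3 \<le> length ?bl" using l4 by simp
      show "distinct ?bl" by fact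
      fix i assume "Suc i < length ?bl"
      then show "E (?bl!i) (?bl!Suc i)" using sx by (simp add: nth_butlast)
    next
      have bne: "?bl \<noteq> []" using l4 by (cases xs rule: rev_cases) auto
      have "last ?bl = ?bl ! (length ?bl - 1)" using bne by (simp add: last_conv_nth)
      also have "\<dots> = xs ! (length xs - 2)" using l4 by (simp add: nth_butlast) (metis numeral_2_eq_2)
      finally have "last ?bl = xs ! (length xs - 2)" .
      moreover have "hd ?bl = last xs"
      proof -
        have xr: "xs = hd xs # tl xs" "tl xs \<noteq> []" using l4 by (cases xs, auto)+
        have "butlast xs = hd xs # butlast (tl xs)" using xr by (metis butlast.simps(2))
        then show ?thesis using less.prems(4) by simp
      qed
      moreover have "last xs = xs ! Suc (length xs - 2)"
      proof -
        have "Suc (length xs - 2) = length xs - 1" "xs \<noteq> []" using l4 by auto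
        then show ?thesis by (simp add: last_conv_nth)
      qed
      moreover have "Suc (length xs - 2) < length xs" using l4 by simp
      ultimately show "E (last ?bl) (hd ?bl)" using sx by metis
    qed
    then show False using nc by blast
  next
    case False
    then obtain i j where ij: "i < j" "j < length (butlast xs)" "butlast xs ! i = butlast xs ! j"
      by (metis distinct_conv_nth linorder_neqE_nat)
    have jl: "Suc j < length xs" using ij by simp
    let ?ys = "drop i (take (Suc j) xs)"
    have dec: "xs = take i xs @ ?ys @ drop (Suc j) xs"
      using ij by (metis append.assoc append_take_drop_id less_imp_le_nat less_SucI take_take min_absorb1)
    have ly: "length ?ys = Suc j - i" using jl by simp
    have "walkp E ?ys"
      using less.prems(1) dec ij unfolding walkp_def
      by (metis append.assoc append_Nil2 less_imp_le_nat ly successively_append_iff Suc_diff_le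
           length_0_conv nat.distinct(1))
    moreover have "nobt ?ys" using less.prems(2) dec by (metis nobt_appendD1 nobt_appendD2)
    moreover have "length ?ys \<ge> 2" using ly ij by simp
    moreover have "hd ?ys = last ?ys"
    proof -
      have "hd ?ys = xs ! i" using ij jl by (simp add: hd_drop_conv_nth)
      moreover have "last ?ys = xs ! j" using ij jl
        by (simp add: last_conv_nth)
      ultimately show ?thesis using ij by (simp add: nth_butlast)
    qed
    moreover have "length ?ys < length xs" using ly jl by simp
    ultimately show False using less.hyps by blast
  qed
qed

lemma walkp_tl: "walkp E (a # t) \<Longrightarrow> t \<noteq> [] \<Longrightarrow> walkp E t"
  unfolding walkp_def by (auto simp: successively_Cons)

lemma nobt_tl: "nobt (a # t) \<Longrightarrow> nobt t"
  using nobt_appendD2[of "[a]" t] by simp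

lemma reduced_unique:
  assumes sg: "simple_graph VT E" and nc: "\<nexists>xs. is_cycle E xs"
  shows "walkp E xs \<Longrightarrow> walkp E zs \<Longrightarrow> nobt xs \<Longrightarrow> nobt zs \<Longrightarrow> hd xs = hd zs
     \<Longrightarrow> last xs = last zs \<Longrightarrow> xs = zs"
proof (induction xs arbitrary: zs)
  case Nil then show ?case by (simp add: walkp_def)
next
  case (Cons a xs')
  have sym: "E u w \<Longrightarrow> E w u" for u w using sg unfolding simple_graph_def by auto
  obtain b zs' where zs: "zs = b # zs'" using Cons.prems(2) unfolding walkp_def by (cases zs) auto
  have ab: "b = a" using Cons.prems(5) zs by simp
  show ?case
  proof (cases xs')
    case Nil
    show ?thesis
    proof (cases zs')
      case Nil then show ?thesis using zs ab \<open>xs' = []\<close> by simp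
    next
      case (Cons z1 zs'')
      have "False"
        apply (rule closed_walk[OF sg nc, of zs])
        using Cons.prems zs ab \<open>xs' = []\<close> Cons by simp_all
      then show ?thesis ..
    qed
  next
    case xc: (Cons x1 xs'')
    show ?thesis
    proof (cases zs')
      case Nil
      have "False"
        apply (rule closed_walk[OF sg nc, of "a # xs'"])
        using Cons.prems zs ab xc Nil by simp_all
      then show ?thesis ..
    next
      case zc: (Cons z1 zs'')
      show ?thesis
      proof (cases "x1 = z1")
        case True
        have "xs' = zs'"
          apply (rule Cons.IH)
          using Cons.prems zs ab xc zc True walkp_tl[of E a xs'] walkp_tl[of E b zs'] nobt_tl[of a xs'] nobt_tl[of b zs'] by simp_all
        then show ?thesis using zs ab by simp
      next
        case False
        let ?L = "rev (z1#zs'') @ (a#x1#xs'')"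
        have "walkp E zs'" using walkp_tl[of E b zs'] Cons.prems(2) zs zc by simp
        then have "successively E (z1#zs'')" using zc unfolding walkp_def by simp
        then have "successively (\<lambda>x y. E y x) (z1#zs'')"
          by (rule successively_mono) (use sym in blast)
        then have w1: "walkp E (rev (z1#zs''))" unfolding walkp_def
          using successively_rev[of E "z1#zs''"] by (simp del: successively_rev)
        have e1: "E a z1" using Cons.prems(2) zs zc ab unfolding walkp_def by simp
        have "walkp E ?L" unfolding walkp_append using w1 Cons.prems(1) xc sym[OF e1] by simp
        moreover have "nobt ?L"
        proof -
          have "nobt (rev (z1#zs'') @ [a,x1])"
            using Cons.prems(4) zs zc ab False nobt_rev[of "x1#a#z1#zs''"] by simp
          then show ?thesis using nobt_append[of "rev (z1#zs'')" a x1 xs''] Cons.prems(3) xc by simp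
        qed
        moreover have "length ?L \<ge> 2" by simp
        moreover have "hd ?L = last ?L"
          using Cons.prems(6) zs zc xc by (simp add: hd_rev)
        ultimately have False using closed_walk[OF sg nc] by blast
        then show ?thesis ..
      qed
    qed
  qed
qed



lemma orb_self:
  assumes H: "subgroup H (BijGroup A)" and x: "x \<in> A"
  shows "x \<in> {g x | g. g \<in> H}"
proof -
  have "\<one>\<^bsub>BijGroup A\<^esub> \<in> H" using subgroup.one_closed[OF H] .
  moreover have "\<one>\<^bsub>BijGroup A\<^esub> x = x" using x by (simp add: BijGroup_def)
  ultimately show ?thesis by (metis (mono_tags, lifting) mem_Collect_eq)
qed

lemma orb_eq:
  assumes H: "subgroup H (BijGroup A)" and x: "x \<in> A" and y: "y \<in> {g x | g. g \<in> H}"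
  shows "{g y | g. g \<in> H} = {g x | g. g \<in> H}"
proof -
  obtain \<sigma> where s: "\<sigma> \<in> H" "y = \<sigma> x" using y by blast
  have HB: "H \<subseteq> Bij A" using subgroup.subset[OF H] by (simp add: BijGroup_def)
  have sB: "\<sigma> \<in> Bij A" using s HB by blast
  have yA: "y \<in> A" using sB x s(2) Bij_imp_funcset by blast
  have mult: "\<rho> \<in> H \<Longrightarrow> \<tau> \<in> H \<Longrightarrow> \<rho> \<otimes>\<^bsub>BijGroup A\<^esub> \<tau> = compose A \<rho> \<tau>" for \<rho> \<tau>
    using HB by (auto simp: BijGroup_def)
  show ?thesis
  proof (intro equalityI subsetI)
    fix z assume "z \<in> {g y | g. g \<in> H}"
    then obtain \<rho> where r: "\<rho> \<in> H" "z = \<rho> y" by blast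
    have "\<rho> \<otimes>\<^bsub>BijGroup A\<^esub> \<sigma> \<in> H" using subgroup.m_closed[OF H r(1) s(1)] .
    moreover have "(\<rho> \<otimes>\<^bsub>BijGroup A\<^esub> \<sigma>) x = z" using mult[OF r(1) s(1)] x r(2) s(2) by (simp add: compose_def)
    ultimately show "z \<in> {g x | g. g \<in> H}" by blast
  next
    fix z assume "z \<in> {g x | g. g \<in> H}"
    then obtain \<rho> where r: "\<rho> \<in> H" "z = \<rho> x" by blast
    let ?i = "inv\<^bsub>BijGroup A\<^esub> \<sigma>"
    have iH: "?i \<in> H" using subgroup.m_inv_closed[OF H s(1)] .
    have ieq: "?i = (\<lambda>x \<in> A. (inv_into A \<sigma>) x)" using inv_BijGroup[OF sB] .
    have b: "bij_betw \<sigma> A A" using sB unfolding Bij_def by simp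
    have "?i y = inv_into A \<sigma> (\<sigma> x)" using ieq yA s(2) by simp
    also have "\<dots> = x" using bij_betw_inv_into_left[OF b x] .
    finally have "?i y = x" .
    then have "(\<rho> \<otimes>\<^bsub>BijGroup A\<^esub> ?i) y = z" using mult[OF r(1) iH] yA r(2) by (simp add: compose_def)
    moreover have "\<rho> \<otimes>\<^bsub>BijGroup A\<^esub> ?i \<in> H" using subgroup.m_closed[OF H r(1) iH] .
    ultimately show "z \<in> {g y | g. g \<in> H}" by blast
  qed
qed

lemma orb_sub:
  assumes H: "subgroup H (BijGroup A)" and x: "x \<in> A"
  shows "{g x | g. g \<in> H} \<subseteq> A"
proof -
  have HB: "H \<subseteq> Bij A" using subgroup.subset[OF H] by (simp add: BijGroup_def)
  then show ?thesis using x Bij_imp_funcset by blast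
qed

locale TS =
  fixes VT VX VY :: "'v set" and E :: "'v \<Rightarrow> 'v \<Rightarrow> bool" and X Y :: "'c set"
    and c :: "'v \<times> 'v \<Rightarrow> 'c" and M N :: "('c \<Rightarrow> 'c) set"
  assumes bt: "biregular_tree VT E VX VY X Y" and lc: "legal_colouring VT E VX VY X Y c"
    and XY: "X \<inter> Y = {}" and Xne: "X \<noteq> {}" and Yne: "Y \<noteq> {}"
    and sM: "subgroup M (BijGroup X)" and sN: "subgroup N (BijGroup Y)"
begin

definition S where "S v = (if v \<in> VX then X else Y)"

lemma sg: "simple_graph VT E" using bt unfolding biregular_tree_def is_tree_def by auto
lemma nc: "\<nexists>xs. is_cycle E xs" using bt unfolding biregular_tree_def is_tree_def by auto
lemma conn: "u \<in> VT \<Longrightarrow> w \<in> VT \<Longrightarrow> E\<^sup>*\<^sup>* u w"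
  using bt unfolding biregular_tree_def is_tree_def connected_graph_def by auto
lemma VTne: "VT \<noteq> {}" using bt unfolding biregular_tree_def is_tree_def by auto
lemma part: "VX \<union> VY = VT" "VX \<inter> VY = {}" using bt unfolding biregular_tree_def by auto
lemma bip: "E u w \<Longrightarrow> (u \<in> VX \<longleftrightarrow> w \<in> VY)" using bt unfolding biregular_tree_def by auto
lemma Ein: "E u w \<Longrightarrow> u \<in> VT" "E u w \<Longrightarrow> w \<in> VT" using sg unfolding simple_graph_def by auto
lemma Esym: "E u w \<Longrightarrow> E w u" using sg unfolding simple_graph_def by auto

lemma colbij: "v \<in> VT \<Longrightarrow> bij_betw c (arcs_from E v) (S v)"
proof -
  assume v: "v \<in> VT"
  have a: "\<forall>v\<in>VX. bij_betw c (arcs_from E v) X" "\<forall>v\<in>VY. bij_betw c (arcs_from E v) Y"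
    using lc unfolding legal_colouring_def by simp_all
  show ?thesis
  proof (cases "v \<in> VX")
    case True then show ?thesis using a unfolding S_def by simp
  next
    case False then have "v \<in> VY" using v part by blast
    then show ?thesis using a False unfolding S_def by simp
  qed
qed

lemma arcsto: "E u w \<Longrightarrow> E u' w \<Longrightarrow> c (u,w) = c (u',w)"
proof -
  assume a: "E u w" "E u' w"
  have "w \<in> VT" using Ein a by auto
  moreover have "(u,w) \<in> arcs_to E w" "(u',w) \<in> arcs_to E w" using a by (auto simp: arcs_to_def)
  ultimately show ?thesis using lc unfolding legal_colouring_def by blast
qed

lemma cS: "E v w \<Longrightarrow> c (v,w) \<in> S v"
proof -
  assume e: "E v w"
  have "(v,w) \<in> arcs_from E v" using e by (simp add: arcs_from_def)
  then show ?thesis using colbij[OF Ein(1)[OF e]] unfolding bij_betw_def by blast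
qed

lemma cinj: "E v w \<Longrightarrow> E v w' \<Longrightarrow> c (v,w) = c (v,w') \<Longrightarrow> w = w'"
proof -
  assume e: "E v w" "E v w'" "c (v,w) = c (v,w')"
  have "(v,w) \<in> arcs_from E v" "(v,w') \<in> arcs_from E v" using e by (auto simp add: arcs_from_def)
  moreover have "inj_on c (arcs_from E v)" using colbij[OF Ein(1)[OF e(1)]] unfolding bij_betw_def by blast
  ultimately have "(v,w) = (v,w')" using e(3) unfolding inj_on_def by blast
  then show ?thesis by simp
qed

lemma csurj: "v \<in> VT \<Longrightarrow> k \<in> S v \<Longrightarrow> \<exists>w. E v w \<and> c (v,w) = k"
proof -
  assume a: "v \<in> VT" "k \<in> S v"
  then have "k \<in> c ` arcs_from E v" using colbij[OF a(1)] unfolding bij_betw_def by simp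
  then obtain p where "p \<in> arcs_from E v" "c p = k" by blast
  then show ?thesis unfolding arcs_from_def by auto
qed

lemma Sne: "S v \<noteq> {}" using Xne Yne S_def by auto

lemma hasnb: "v \<in> VT \<Longrightarrow> \<exists>u. E u v"
proof -
  assume a: "v \<in> VT"
  obtain k where "k \<in> S v" using Sne by blast
  then obtain w where "E v w" using csurj a by blast
  then show ?thesis using Esym by blast
qed

lemma XYsub: "S v \<subseteq> X \<union> Y" unfolding S_def by auto

lemma partVX: "v \<in> VT \<Longrightarrow> v \<notin> VX \<Longrightarrow> v \<in> VY" using part by auto
lemma partVY: "v \<in> VY \<Longrightarrow> v \<notin> VX" using part by auto

definition lab where "lab v = c (SOME u. E u v, v)"

lemma lab_eq: "E u v \<Longrightarrow> lab v = c (u, v)"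
proof -
  assume a: "E u v"
  then have "E (SOME u. E u v) v" by (rule someI)
  then show ?thesis unfolding lab_def using arcsto a by blast
qed

lemma lab_XY: "v \<in> VT \<Longrightarrow> lab v \<in> X \<union> Y"
proof -
  assume "v \<in> VT"
  then obtain u where u: "E u v" using hasnb by blast
  show ?thesis using lab_eq[OF u] cS[OF u] XYsub by auto
qed

lemma lab_X: "v \<in> VY \<Longrightarrow> lab v \<in> X"
proof -
  assume v: "v \<in> VY"
  then obtain u where "E u v" using hasnb part by blast
  then have "u \<in> VX" using bip v by auto
  then show ?thesis using cS[OF \<open>E u v\<close>] lab_eq[OF \<open>E u v\<close>] S_def by auto
qed

lemma lab_Y: "v \<in> VX \<Longrightarrow> lab v \<in> Y"
proof -
  assume v: "v \<in> VX"
  then obtain u where "E u v" using hasnb part by blast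
  then have "u \<notin> VX" using bip v partVY by auto
  then show ?thesis using cS[OF \<open>E u v\<close>] lab_eq[OF \<open>E u v\<close>] S_def by auto
qed

definition nb where "nb y k = (THE z. E y z \<and> c (y,z) = k)"

lemma nb: "y \<in> VT \<Longrightarrow> k \<in> S y \<Longrightarrow> E y (nb y k) \<and> c (y, nb y k) = k"
proof -
  assume "y \<in> VT" "k \<in> S y"
  then obtain z where z: "E y z" "c (y,z) = k" using csurj by blast
  have "\<exists>!z. E y z \<and> c (y,z) = k" using z cinj by blast
  then show ?thesis unfolding nb_def by (rule theI')
qed

lemma nb_eq: "E y z \<Longrightarrow> nb y (c (y,z)) = z"
  unfolding nb_def
proof (rule the_equality)
  assume "E y z" then show "E y z \<and> c (y, z) = c (y, z)" by simp
next
  fix x assume "E y z" "E y x \<and> c (y, x) = c (y, z)" then show "x = z" using cinj by blast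
qed

definition compat where
  "compat \<phi> y x \<longleftrightarrow> x \<in> VT \<and> y \<in> VT \<and> (x \<in> VX \<longleftrightarrow> y \<in> VX) \<and> lab y = \<phi> (lab x)"

definition phiok where "phiok \<phi> \<longleftrightarrow> (\<forall>x\<in>X. \<phi> x \<in> X) \<and> (\<forall>x\<in>Y. \<phi> x \<in> Y)"

lemma phiS: "phiok \<phi> \<Longrightarrow> k \<in> S v \<Longrightarrow> \<phi> k \<in> S v"
  unfolding phiok_def S_def by (auto split: if_splits)

lemma step:
  assumes "phiok \<phi>" "compat \<phi> y a" "E a b"
  shows "E y (nb y (\<phi> (c(a,b)))) \<and> c (y, nb y (\<phi> (c(a,b)))) = \<phi> (c(a,b))
         \<and> compat \<phi> (nb y (\<phi> (c(a,b)))) b"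
proof -
  have Sya: "S y = S a" using assms(2) unfolding compat_def S_def by auto
  have "\<phi> (c(a,b)) \<in> S y" using phiS[OF assms(1) cS[OF assms(3)]] Sya by simp
  then have z: "E y (nb y (\<phi> (c(a,b))))" "c (y, nb y (\<phi> (c(a,b)))) = \<phi> (c(a,b))"
    using nb assms(2) unfolding compat_def by auto
  let ?z = "nb y (\<phi> (c(a,b)))"
  have "?z \<in> VT" "b \<in> VT" using Ein z assms(3) by auto
  moreover have "b \<in> VX \<longleftrightarrow> ?z \<in> VX"
  proof -
    have "a \<in> VX \<longleftrightarrow> y \<in> VX" using assms(2) unfolding compat_def by simp
    moreover have "a \<in> VX \<longleftrightarrow> b \<in> VY" "y \<in> VX \<longleftrightarrow> ?z \<in> VY" using bip[OF assms(3)] bip[OF z(1)] by auto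
    moreover have "b \<in> VX \<longleftrightarrow> b \<notin> VY" "?z \<in> VX \<longleftrightarrow> ?z \<notin> VY"
      using part Ein[OF assms(3)] Ein[OF z(1)] by auto
    ultimately show ?thesis by blast
  qed
  moreover have "lab ?z = \<phi> (lab b)" using lab_eq[OF z(1)] lab_eq[OF assms(3)] z(2) by simp
  ultimately show ?thesis using z unfolding compat_def by simp
qed

lemma step_back:
  assumes "phiok \<phi>" "compat \<phi> y a" "E a b"
  shows "nb (nb y (\<phi> (c(a,b)))) (\<phi> (c(b,a))) = y"
proof -
  let ?z = "nb y (\<phi> (c(a,b)))"
  have z: "E y ?z" using step[OF assms] by simp
  have "c (b,a) = lab a" using lab_eq[OF Esym[OF assms(3)]] by simp
  then have "\<phi> (c(b,a)) = lab y" using assms(2) unfolding compat_def by simp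
  also have "\<dots> = c (?z, y)" using lab_eq[OF Esym[OF z]] .
  finally show ?thesis using nb_eq[OF Esym[OF z]] by simp
qed

fun img :: "('c \<Rightarrow> 'c) \<Rightarrow> 'v \<Rightarrow> 'v list \<Rightarrow> 'v list" where
  "img \<phi> y [] = []"
| "img \<phi> y [x] = [y]"
| "img \<phi> y (x1#x2#xs) = y # img \<phi> (nb y (\<phi> (c(x1,x2)))) (x2#xs)"

lemma img_len: "length (img \<phi> y xs) = length xs"
  by (induction \<phi> y xs rule: img.induct) auto

lemma img_ne: "xs \<noteq> [] \<Longrightarrow> img \<phi> y xs \<noteq> []"
  using img_len by (metis length_0_conv)

lemma img_Cons: "L \<noteq> [] \<Longrightarrow> img \<phi> y (a # L) = y # img \<phi> (nb y (\<phi> (c (a, hd L)))) L"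
  by (cases L) auto

lemma img_hd: "xs \<noteq> [] \<Longrightarrow> hd (img \<phi> y xs) = y"
  by (cases xs; cases "tl xs") auto

lemma img_snoc: "xs \<noteq> [] \<Longrightarrow>
   img \<phi> y (xs @ [w]) = img \<phi> y xs @ [nb (last (img \<phi> y xs)) (\<phi> (c (last xs, w)))]"
proof (induction \<phi> y xs rule: img.induct)
  case (3 \<phi> y x1 x2 xs)
  then show ?case using img_ne[of "x2#xs"] by simp
qed auto

lemma img_walk:
  "phiok \<phi> \<Longrightarrow> walkp E xs \<Longrightarrow> compat \<phi> y (hd xs) \<Longrightarrow>
    walkp E (img \<phi> y xs) \<and> compat \<phi> (last (img \<phi> y xs)) (last xs)"
proof (induction \<phi> y xs rule: img.induct)
  case (1 \<phi> y) then show ?case by (simp add: walkp_def)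
next
  case (2 \<phi> y x) then show ?case by (simp add: walkp_def)
next
  case (3 \<phi> y x1 x2 xs)
  let ?z = "nb y (\<phi> (c(x1,x2)))"
  have e: "E x1 x2" using "3.prems"(2) unfolding walkp_def by simp
  have c0: "compat \<phi> y x1" using "3.prems"(3) by simp
  note st0 = step[OF "3.prems"(1) c0 e]
  have st: "E y ?z" "compat \<phi> ?z x2" using st0 by simp_all
  have w: "walkp E (x2#xs)" using walkp_tl[OF "3.prems"(2)] by simp
  have ih: "walkp E (img \<phi> ?z (x2#xs)) \<and> compat \<phi> (last (img \<phi> ?z (x2#xs))) (last (x2#xs))"
    using "3.IH"[OF "3.prems"(1) w] st by simp
  have hz: "hd (img \<phi> ?z (x2#xs)) = ?z" by (simp add: img_hd)
  have ne: "img \<phi> ?z (x2#xs) \<noteq> []" by (simp add: img_ne)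
  have "walkp E (y # img \<phi> ?z (x2#xs))"
    using ih st(1) hz ne unfolding walkp_def by (simp add: successively_Cons)
  then show ?case using ih ne by simp
qed

lemma img_bt:
  assumes ok: "phiok \<phi>"
  shows "walkp E (p @ u#w#u#q) \<Longrightarrow> compat \<phi> y (hd (p @ u#w#u#q)) \<Longrightarrow>
    last (img \<phi> y (p @ u#w#u#q)) = last (img \<phi> y (p @ u#q))"
proof (induction p arbitrary: y)
  case Nil
  have e: "E u w" using Nil.prems(1) unfolding walkp_def by simp
  have c0: "compat \<phi> y u" using Nil.prems(2) by simp
  let ?z = "nb y (\<phi> (c(u,w)))"
  have "nb ?z (\<phi> (c(w,u))) = y" using step_back[OF ok c0 e] .
  then have "img \<phi> y (u#w#u#q) = y # ?z # img \<phi> y (u#q)" by simp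
  then show ?case by (simp add: img_ne)
next
  case (Cons a p)
  let ?L = "p @ u#w#u#q" and ?L' = "p @ u#q"
  have hdL: "hd ?L = hd ?L'" by (cases p) auto
  let ?z = "nb y (\<phi> (c (a, hd ?L)))"
  have e: "E a (hd ?L)" using Cons.prems(1) unfolding walkp_def by (simp add: successively_Cons)
  have c0: "compat \<phi> y a" using Cons.prems(2) by simp
  have cz: "compat \<phi> ?z (hd ?L)" using step[OF ok c0 e] by simp
  have wL: "walkp E ?L" using walkp_tl[of E a ?L] Cons.prems(1) by simp
  have ih: "last (img \<phi> ?z ?L) = last (img \<phi> ?z ?L')" using Cons.IH[OF wL cz] .
  have "img \<phi> y ((a # p) @ u#w#u#q) = y # img \<phi> ?z ?L" using img_Cons[of ?L \<phi> y a] by simp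
  moreover have "img \<phi> y ((a # p) @ u#q) = y # img \<phi> ?z ?L'" using img_Cons[of ?L' \<phi> y a] hdL by simp
  ultimately show ?case using ih by (simp add: img_ne)
qed

lemma walk_remove:
  assumes "walkp E (p @ u#w#u#q)" shows "walkp E (p @ u#q)"
proof -
  have s: "successively E (p @ u#w#u#q)" using assms unfolding walkp_def by simp
  then have "successively E p" "successively E (u#w#u#q)" "p = [] \<or> E (last p) u"
    unfolding successively_append_iff by auto
  then have "successively E (p @ u#q)" unfolding successively_append_iff by simp
  then show ?thesis unfolding walkp_def by simp
qed

lemma reduce:
  assumes ok: "phiok \<phi>"
  shows "walkp E xs \<Longrightarrow> compat \<phi> y (hd xs) \<Longrightarrow>
    \<exists>rs. walkp E rs \<and> nobt rs \<and> hd rs = hd xs \<and> last rs = last xs \<and> last (img \<phi> y rs) = last (img \<phi> y xs)"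
proof (induction "length xs" arbitrary: xs rule: less_induct)
  case less
  show ?case
  proof (cases "nobt xs")
    case True then show ?thesis using less.prems by blast
  next
    case False
    then obtain p u w q where xs: "xs = p @ u#w#u#q" using not_nobt by blast
    let ?xs' = "p @ u#q"
    have w': "walkp E ?xs'" using walk_remove less.prems(1) xs by simp
    have hd': "hd ?xs' = hd xs" using xs by (cases p) auto
    have last': "last ?xs' = last xs" using xs by (cases q) auto
    have len: "length ?xs' < length xs" using xs by simp
    have ib: "last (img \<phi> y xs) = last (img \<phi> y ?xs')" using img_bt[OF ok] less.prems xs by simp
    obtain rs where "walkp E rs \<and> nobt rs \<and> hd rs = hd ?xs' \<and> last rs = last ?xs' \<and> last (img \<phi> y rs) = last (img \<phi> y ?xs')"
      using less.hyps[OF len w'] less.prems(2) hd' by auto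
    then show ?thesis using hd' last' ib by auto
  qed
qed

lemma func:
  assumes ok: "phiok \<phi>" and w: "walkp E xs" "walkp E zs" and h: "hd xs = hd zs"
    and l: "last xs = last zs" and cp: "compat \<phi> y (hd xs)"
  shows "last (img \<phi> y xs) = last (img \<phi> y zs)"
proof -
  obtain r1 where r1: "walkp E r1" "nobt r1" "hd r1 = hd xs" "last r1 = last xs" "last (img \<phi> y r1) = last (img \<phi> y xs)"
    using reduce[OF ok w(1) cp] by blast
  obtain r2 where r2: "walkp E r2" "nobt r2" "hd r2 = hd zs" "last r2 = last zs" "last (img \<phi> y r2) = last (img \<phi> y zs)"
    using reduce[OF ok w(2)] cp h by auto
  have "r1 = r2" using reduced_unique[OF sg nc r1(1) r2(1) r1(2) r2(2)] r1(3,4) r2(3,4) h l by simp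
  then show ?thesis using r1(5) r2(5) by simp
qed

lemma walk_last_VT: "walkp E xs \<Longrightarrow> hd xs \<in> VT \<Longrightarrow> last xs \<in> VT"
proof (induction xs rule: rev_induct)
  case Nil then show ?case by (simp add: walkp_def)
next
  case (snoc x xs)
  show ?case
  proof (cases "xs = []")
    case True then show ?thesis using snoc.prems by simp
  next
    case False
    then have "E (last xs) x" using snoc.prems(1) unfolding walkp_append by (simp add: walkp_def)
    then show ?thesis using Ein by simp
  qed
qed

lemma walk_exists: "v \<in> VT \<Longrightarrow> w \<in> VT \<Longrightarrow> \<exists>xs. walkp E xs \<and> hd xs = v \<and> last xs = w"
proof -
  assume v: "v \<in> VT" and w: "w \<in> VT"
  have "E\<^sup>*\<^sup>* v w" using conn v w by blast
  then show ?thesis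
  proof (induction rule: rtranclp_induct)
    case base then show ?case by (intro exI[of _ "[v]"]) (simp add: walkp_def)
  next
    case (step b d)
    then obtain xs where xs: "walkp E xs" "hd xs = v" "last xs = b" by blast
    have "walkp E (xs @ [d])" unfolding walkp_append using xs step(2) by (simp add: walkp_def)
    moreover have "hd (xs @ [d]) = v" using xs by (simp add: walkp_def)
    ultimately show ?case by (intro exI[of _ "xs @ [d]"]) simp
  qed
qed

definition gmap where
  "gmap \<phi> v v' w = (if w \<in> VT then last (img \<phi> v' (SOME xs. walkp E xs \<and> hd xs = v \<and> last xs = w)) else undefined)"

lemma gmap_walk:
  assumes ok: "phiok \<phi>" and cp: "compat \<phi> v' v" and w: "walkp E xs" and h: "hd xs = v"
  shows "gmap \<phi> v v' (last xs) = last (img \<phi> v' xs)"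
proof -
  have vT: "v \<in> VT" using cp compat_def by simp
  have lT: "last xs \<in> VT" using walk_last_VT w h vT by simp
  let ?s = "SOME xs'. walkp E xs' \<and> hd xs' = v \<and> last xs' = last xs"
  have "walkp E ?s \<and> hd ?s = v \<and> last ?s = last xs"
    by (rule someI[of _ xs]) (use w h in simp)
  then have "last (img \<phi> v' ?s) = last (img \<phi> v' xs)"
    using func[OF ok, of ?s xs v'] w h cp by simp
  then show ?thesis unfolding gmap_def using lT by simp
qed

lemma img_inv:
  assumes ok: "phiok \<phi>" and inv: "\<forall>x\<in>X \<union> Y. \<psi> (\<phi> x) = x"
  shows "walkp E xs \<Longrightarrow> compat \<phi> y (hd xs) \<Longrightarrow> img \<psi> (hd xs) (img \<phi> y xs) = xs"
proof (induction xs arbitrary: y rule: induct_list012)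
  case 1 then show ?case by simp
next
  case (2 x) then show ?case by simp
next
  case (3 x1 x2 xs)
  let ?z = "nb y (\<phi> (c(x1,x2)))"
  have e: "E x1 x2" using "3.prems"(1) unfolding walkp_def by simp
  have c0: "compat \<phi> y x1" using "3.prems"(2) by simp
  note st0 = step[OF ok c0 e]
  let ?L = "img \<phi> ?z (x2#xs)"
  have Lne: "?L \<noteq> []" by (simp add: img_ne)
  have hL: "hd ?L = ?z" by (simp add: img_hd)
  have "img \<psi> x1 (y # ?L) = x1 # img \<psi> (nb x1 (\<psi> (c (y, ?z)))) ?L"
    using img_Cons[OF Lne, of \<psi> x1 y] hL by simp
  moreover have "\<psi> (c (y, ?z)) = c (x1,x2)"
    using st0 inv cS[OF e] XYsub by auto
  moreover have "nb x1 (c (x1,x2)) = x2" using nb_eq[OF e] .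
  moreover have "img \<psi> x2 ?L = x2 # xs"
    using "3.IH"(2)[of ?z] walkp_tl[OF "3.prems"(1)] st0 by simp
  ultimately show ?case by simp
qed

lemma G1:
  assumes ok: "phiok \<phi>" and cp: "compat \<phi> v' v" and w: "w \<in> VT"
  shows "compat \<phi> (gmap \<phi> v v' w) w"
proof -
  have vT: "v \<in> VT" using cp compat_def by simp
  obtain xs where xs: "walkp E xs" "hd xs = v" "last xs = w" using walk_exists[OF vT w] by blast
  have "gmap \<phi> v v' w = last (img \<phi> v' xs)" using gmap_walk[OF ok cp xs(1,2)] xs(3) by simp
  moreover have "compat \<phi> (last (img \<phi> v' xs)) (last xs)" using img_walk[OF ok xs(1)] cp xs(2) by simp
  ultimately show ?thesis using xs(3) by simp
qed

lemma G2:
  assumes ok: "phiok \<phi>" and cp: "compat \<phi> v' v" and e: "E u w"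
  shows "E (gmap \<phi> v v' u) (gmap \<phi> v v' w) \<and> c (gmap \<phi> v v' u, gmap \<phi> v v' w) = \<phi> (c (u,w))"
proof -
  have vT: "v \<in> VT" using cp compat_def by simp
  obtain xs where xs: "walkp E xs" "hd xs = v" "last xs = u" using walk_exists[OF vT Ein(1)[OF e]] by blast
  have ne: "xs \<noteq> []" using xs(1) unfolding walkp_def by simp
  have w2: "walkp E (xs @ [w])" unfolding walkp_append using xs e by (simp add: walkp_def)
  have gu: "gmap \<phi> v v' u = last (img \<phi> v' xs)" using gmap_walk[OF ok cp xs(1,2)] xs(3) by simp
  have cu: "compat \<phi> (gmap \<phi> v v' u) u" using img_walk[OF ok xs(1)] cp xs(2,3) gu by simp
  have "gmap \<phi> v v' w = last (img \<phi> v' (xs @ [w]))" using gmap_walk[OF ok cp w2] xs(2) ne by simp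
  also have "\<dots> = nb (gmap \<phi> v v' u) (\<phi> (c (u, w)))" using img_snoc[OF ne] gu xs(3) by simp
  finally show ?thesis using step[OF ok cu e] by simp
qed

lemma G3:
  assumes ok: "phiok \<phi>" and cp: "compat \<phi> v' v"
  shows "gmap \<phi> v v' v = v'"
  using gmap_walk[OF ok cp, of "[v]"] by (simp add: walkp_def)

lemma compat_inv:
  assumes inv: "\<forall>x\<in>X \<union> Y. \<psi> (\<phi> x) = x" and cp: "compat \<phi> v' v"
  shows "compat \<psi> v v'"
  using cp inv lab_XY unfolding compat_def by auto

lemma G_inv:
  assumes ok: "phiok \<phi>" and okp: "phiok \<psi>" and inv: "\<forall>x\<in>X \<union> Y. \<psi> (\<phi> x) = x"
    and cp: "compat \<phi> v' v" and w: "w \<in> VT"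
  shows "gmap \<psi> v' v (gmap \<phi> v v' w) = w"
proof -
  have vT: "v \<in> VT" using cp compat_def by simp
  obtain xs where xs: "walkp E xs" "hd xs = v" "last xs = w" using walk_exists[OF vT w] by blast
  have ne: "xs \<noteq> []" using xs(1) unfolding walkp_def by simp
  let ?ys = "img \<phi> v' xs"
  have g: "gmap \<phi> v v' w = last ?ys" using gmap_walk[OF ok cp xs(1,2)] xs(3) by simp
  have wy: "walkp E ?ys" using img_walk[OF ok xs(1)] cp xs(2) by simp
  have hy: "hd ?ys = v'" using img_hd[OF ne] .
  have cp': "compat \<psi> v v'" using compat_inv[OF inv cp] .
  have "gmap \<psi> v' v (last ?ys) = last (img \<psi> v ?ys)" using gmap_walk[OF okp cp' wy hy] .
  also have "img \<psi> v ?ys = xs" using img_inv[OF ok inv xs(1)] cp xs(2) by simp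
  finally show ?thesis using g xs(3) by simp
qed

lemma construct:
  assumes ok: "phiok \<phi>" and okp: "phiok \<psi>" and i1: "\<forall>x\<in>X \<union> Y. \<psi> (\<phi> x) = x"
    and i2: "\<forall>x\<in>X \<union> Y. \<phi> (\<psi> x) = x" and cp: "compat \<phi> v' v"
  shows "\<exists>g. g \<in> tree_aut VT E \<and> g ` VX = VX \<and> g v = v' \<and> (\<forall>a b. E a b \<longrightarrow> c (g a, g b) = \<phi> (c (a,b)))"
proof -
  let ?g = "gmap \<phi> v v'" and ?h = "gmap \<psi> v' v"
  have cp': "compat \<psi> v v'" using compat_inv[OF i1 cp] .
  have hg: "\<forall>w\<in>VT. ?h (?g w) = w" using G_inv[OF ok okp i1 cp] by blast
  have gh: "\<forall>w\<in>VT. ?g (?h w) = w" using G_inv[OF okp ok i2 cp'] by blast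
  have gc: "w \<in> VT \<Longrightarrow> compat \<phi> (?g w) w" for w using G1[OF ok cp] .
  have hc: "w \<in> VT \<Longrightarrow> compat \<psi> (?h w) w" for w using G1[OF okp cp'] .
  have gT: "?g ` VT \<subseteq> VT" using gc unfolding compat_def by auto
  have hT: "?h ` VT \<subseteq> VT" using hc unfolding compat_def by auto
  have bij: "bij_betw ?g VT VT" using bij_betw_byWitness[OF hg gh gT hT] .
  have ext: "?g \<in> extensional VT" unfolding extensional_def gmap_def by simp
  have B: "?g \<in> Bij VT" using bij ext unfolding Bij_def by simp
  have edges: "\<forall>u\<in>VT. \<forall>w\<in>VT. E u w \<longleftrightarrow> E (?g u) (?g w)"
  proof (intro ballI iffI)
    fix u w assume "u \<in> VT" "w \<in> VT" "E u w"
    then show "E (?g u) (?g w)" using G2[OF ok cp] by blast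
  next
    fix u w assume uw: "u \<in> VT" "w \<in> VT" "E (?g u) (?g w)"
    then have "E (?h (?g u)) (?h (?g w))" using G2[OF okp cp'] by blast
    then show "E u w" using hg uw by simp
  qed
  have ta: "?g \<in> tree_aut VT E" unfolding tree_aut_def using B edges by simp
  have VXsub: "VX \<subseteq> VT" using part by blast
  have gX: "?g ` VX = VX"
  proof
    show "?g ` VX \<subseteq> VX" using gc VXsub unfolding compat_def by blast
  next
    show "VX \<subseteq> ?g ` VX"
    proof
      fix w assume w: "w \<in> VX"
      then have "?h w \<in> VX" using hc VXsub unfolding compat_def by blast
      moreover have "?g (?h w) = w" using gh w VXsub by blast
      ultimately show "w \<in> ?g ` VX" by (metis image_eqI)
    qed
  qed
  show ?thesis
    apply (rule exI[of _ ?g])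
    using ta gX G3[OF ok cp] G2[OF ok cp] by blast
qed

lemma la_eval:
  assumes e: "E u w" shows "local_action E c g u (S u) (c(u,w)) = c (g u, g w)"
proof -
  have inj: "inj_on c (arcs_from E u)" using colbij[OF Ein(1)[OF e]] unfolding bij_betw_def by blast
  have a: "(u,w) \<in> arcs_from E u" using e by (simp add: arcs_from_def)
  have "the_inv_into (arcs_from E u) c (c (u,w)) = (u,w)" using the_inv_into_f_f[OF inj a] .
  then show ?thesis unfolding local_action_def using cS[OF e] by simp
qed

lemma la_phi:
  assumes h: "\<forall>a b. E a b \<longrightarrow> c (g a, g b) = \<phi> (c (a,b))" and u: "u \<in> VT"
  shows "local_action E c g u (S u) = restrict \<phi> (S u)"
proof
  fix x show "local_action E c g u (S u) x = restrict \<phi> (S u) x"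
  proof (cases "x \<in> S u")
    case True
    then obtain w where w: "E u w" "c (u,w) = x" using csurj u by blast
    then show ?thesis using la_eval[OF w(1), of g] h True by auto
  next
    case False then show ?thesis unfolding local_action_def by simp
  qed
qed

definition mkphi :: "('c \<Rightarrow> 'c) \<Rightarrow> ('c \<Rightarrow> 'c) \<Rightarrow> 'c \<Rightarrow> 'c" where
  "mkphi \<sigma> \<tau> x = (if x \<in> X then \<sigma> x else if x \<in> Y then \<tau> x else x)"

lemma mkphi_X: "x \<in> X \<Longrightarrow> mkphi \<sigma> \<tau> x = \<sigma> x" by (simp add: mkphi_def)
lemma mkphi_Y: "x \<in> Y \<Longrightarrow> mkphi \<sigma> \<tau> x = \<tau> x" using XY by (auto simp add: mkphi_def)

lemma MB: "M \<subseteq> Bij X" using subgroup.subset[OF sM] by (simp add: BijGroup_def)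
lemma NB: "N \<subseteq> Bij Y" using subgroup.subset[OF sN] by (simp add: BijGroup_def)

abbreviation "U \<equiv> U_c VT E VX VY X Y c M N"

lemma constructU:
  assumes s: "\<sigma> \<in> M" and t: "\<tau> \<in> N" and cp: "compat (mkphi \<sigma> \<tau>) v' v"
  shows "\<exists>g\<in>U. g v = v' \<and> (\<forall>a b. E a b \<longrightarrow> c (g a, g b) = mkphi \<sigma> \<tau> (c (a,b)))"
proof -
  have sB: "bij_betw \<sigma> X X" "\<sigma> \<in> extensional X" using s MB unfolding Bij_def by auto
  have tB: "bij_betw \<tau> Y Y" "\<tau> \<in> extensional Y" using t NB unfolding Bij_def by auto
  have sX: "x \<in> X \<Longrightarrow> \<sigma> x \<in> X" for x using sB(1) bij_betwE by blast
  have tY: "x \<in> Y \<Longrightarrow> \<tau> x \<in> Y" for x using tB(1) bij_betwE by blast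
  have siB: "bij_betw (inv_into X \<sigma>) X X" using bij_betw_inv_into[OF sB(1)] .
  have tiB: "bij_betw (inv_into Y \<tau>) Y Y" using bij_betw_inv_into[OF tB(1)] .
  have siX: "x \<in> X \<Longrightarrow> inv_into X \<sigma> x \<in> X" for x using siB bij_betwE by blast
  have tiY: "x \<in> Y \<Longrightarrow> inv_into Y \<tau> x \<in> Y" for x using tiB bij_betwE by blast
  let ?\<phi> = "mkphi \<sigma> \<tau>" and ?\<psi> = "mkphi (inv_into X \<sigma>) (inv_into Y \<tau>)"
  have ok: "phiok ?\<phi>" unfolding phiok_def using sX tY mkphi_X mkphi_Y by simp
  have okp: "phiok ?\<psi>" unfolding phiok_def using siX tiY mkphi_X mkphi_Y by simp
  have i1: "\<forall>x\<in>X \<union> Y. ?\<psi> (?\<phi> x) = x"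
  proof
    fix x assume "x \<in> X \<union> Y"
    then show "?\<psi> (?\<phi> x) = x"
    proof
      assume x: "x \<in> X"
      show ?thesis using mkphi_X[OF x] mkphi_X[OF sX[OF x]] bij_betw_inv_into_left[OF sB(1) x] by simp
    next
      assume x: "x \<in> Y"
      show ?thesis using mkphi_Y[OF x] mkphi_Y[OF tY[OF x]] bij_betw_inv_into_left[OF tB(1) x] by simp
    qed
  qed
  have i2: "\<forall>x\<in>X \<union> Y. ?\<phi> (?\<psi> x) = x"
  proof
    fix x assume "x \<in> X \<union> Y"
    then show "?\<phi> (?\<psi> x) = x"
    proof
      assume x: "x \<in> X"
      show ?thesis using mkphi_X[OF x] mkphi_X[OF siX[OF x]] bij_betw_inv_into_right[OF sB(1) x] by simp
    next
      assume x: "x \<in> Y"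
      show ?thesis using mkphi_Y[OF x] mkphi_Y[OF tiY[OF x]] bij_betw_inv_into_right[OF tB(1) x] by simp
    qed
  qed
  obtain g where g: "g \<in> tree_aut VT E" "g ` VX = VX" "g v = v'"
     "\<forall>a b. E a b \<longrightarrow> c (g a, g b) = ?\<phi> (c (a,b))"
    using construct[OF ok okp i1 i2 cp] by blast
  have rX: "restrict ?\<phi> X = \<sigma>"
  proof
    fix x show "restrict ?\<phi> X x = \<sigma> x" using sB(2) mkphi_X unfolding extensional_def by auto
  qed
  have rY: "restrict ?\<phi> Y = \<tau>"
  proof
    fix x show "restrict ?\<phi> Y x = \<tau> x" using tB(2) mkphi_Y unfolding extensional_def by auto
  qed
  have lX: "\<forall>u\<in>VX. local_action E c g u X \<in> M"
  proof
    fix u assume u: "u \<in> VX"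
    then have "u \<in> VT" "S u = X" using part S_def by auto
    then show "local_action E c g u X \<in> M" using la_phi[OF g(4)] rX s by metis
  qed
  have lY: "\<forall>u\<in>VY. local_action E c g u Y \<in> N"
  proof
    fix u assume u: "u \<in> VY"
    then have "u \<in> VT" "S u = Y" using part S_def by auto
    then show "local_action E c g u Y \<in> N" using la_phi[OF g(4)] rY t by metis
  qed
  have "g \<in> U" unfolding U_c_def using g(1,2) lX lY by simp
  then show ?thesis using g by blast
qed

lemma gVX:
  assumes g: "g \<in> U" and z: "z \<in> VT"
  shows "g z \<in> VT \<and> (g z \<in> VX \<longleftrightarrow> z \<in> VX)"
proof -
  have gB: "bij_betw g VT VT" "g ` VX = VX" using g unfolding U_c_def tree_aut_def Bij_def by auto
  have gz: "g z \<in> VT" using gB(1) z bij_betwE by blast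
  have "g z \<in> VX \<longleftrightarrow> z \<in> VX"
  proof
    assume "g z \<in> VX"
    then obtain x where x: "x \<in> VX" "g z = g x" using gB(2) by (metis imageE)
    have "x \<in> VT" using x part by blast
    then have "z = x" using gB(1) z x(2) unfolding bij_betw_def inj_on_def by blast
    then show "z \<in> VX" using x by simp
  next
    assume "z \<in> VX" then show "g z \<in> VX" using gB(2) by blast
  qed
  then show ?thesis using gz by simp
qed

definition OM where "OM x = {g x | g. g \<in> M}"
definition ON where "ON x = {g x | g. g \<in> N}"

definition key where "key z = (if z \<in> VX then (True, ON (lab z)) else (False, OM (lab z)))"

lemma lab_inv:
  assumes g: "g \<in> U" and z: "z \<in> VT"
  shows "(z \<in> VY \<longrightarrow> lab (g z) \<in> OM (lab z)) \<and> (z \<in> VX \<longrightarrow> lab (g z) \<in> ON (lab z))"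
proof -
  obtain u where e: "E u z" using hasnb z by blast
  have uT: "u \<in> VT" using Ein e by simp
  have ta: "g \<in> tree_aut VT E" using g unfolding U_c_def by simp
  have e': "E (g u) (g z)" using ta uT z e unfolding tree_aut_def by blast
  have l1: "lab (g z) = local_action E c g u (S u) (lab z)"
    using lab_eq[OF e'] la_eval[OF e, of g] lab_eq[OF e] by simp
  show ?thesis
  proof (intro conjI impI)
    assume "z \<in> VY"
    then have "u \<in> VX" using bip e by simp
    then have "local_action E c g u (S u) \<in> M" using g unfolding U_c_def S_def by simp
    then show "lab (g z) \<in> OM (lab z)" using l1 unfolding OM_def by blast
  next
    assume "z \<in> VX"
    then have "u \<notin> VX" using bip e partVY by blast
    then have "u \<in> VY" using uT part by blast
    then have "local_action E c g u (S u) \<in> N" using g \<open>u \<notin> VX\<close> unfolding U_c_def S_def by simp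
    then show "lab (g z) \<in> ON (lab z)" using l1 unfolding ON_def by blast
  qed
qed

lemma key_inv:
  assumes g: "g \<in> U" and z: "z \<in> VT"
  shows "key (g z) = key z"
proof (cases "z \<in> VX")
  case True
  then have "g z \<in> VX" using gVX[OF g z] by simp
  moreover have "ON (lab (g z)) = ON (lab z)"
    using orb_eq[OF sN lab_Y[OF True]] lab_inv[OF g z] True unfolding ON_def by blast
  ultimately show ?thesis using True unfolding key_def by simp
next
  case False
  then have "g z \<notin> VX" "z \<in> VY" using gVX[OF g z] z part by auto
  moreover have "OM (lab (g z)) = OM (lab z)"
    using orb_eq[OF sM lab_X[OF \<open>z \<in> VY\<close>]] lab_inv[OF g z] \<open>z \<in> VY\<close> unfolding OM_def by blast
  ultimately show ?thesis using False unfolding key_def by simp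
qed

lemma oneM: "(\<lambda>x\<in>X. x) \<in> M" using subgroup.one_closed[OF sM] by (simp add: BijGroup_def)
lemma oneN: "(\<lambda>x\<in>Y. x) \<in> N" using subgroup.one_closed[OF sN] by (simp add: BijGroup_def)

lemma key_X: "z \<in> VT \<Longrightarrow> fst (key z) \<longleftrightarrow> z \<in> VX" unfolding key_def by simp

lemma key_trans_Y:
  assumes "z \<in> VT" "z' \<in> VT" "key z' = key z" "z \<notin> VX"
  shows "z \<in> VY \<and> z' \<in> VY \<and> (\<exists>\<sigma>\<in>M. lab z' = \<sigma> (lab z))"
proof -
  have z': "z' \<notin> VX" using assms key_X by metis
  have y: "z \<in> VY" "z' \<in> VY" using assms z' part by auto
  have "OM (lab z') = OM (lab z)" using assms z' unfolding key_def by simp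
  moreover have "lab z' \<in> OM (lab z')" using orb_self[OF sM lab_X[OF y(2)]] unfolding OM_def .
  ultimately show ?thesis using y unfolding OM_def by auto
qed

lemma key_trans_X:
  assumes "z \<in> VT" "z' \<in> VT" "key z' = key z" "z \<in> VX"
  shows "z' \<in> VX \<and> (\<exists>\<tau>\<in>N. lab z' = \<tau> (lab z))"
proof -
  have z': "z' \<in> VX" using assms key_X by metis
  have "ON (lab z') = ON (lab z)" using assms z' unfolding key_def by simp
  moreover have "lab z' \<in> ON (lab z')" using orb_self[OF sN lab_Y[OF z']] unfolding ON_def .
  ultimately show ?thesis using z' unfolding ON_def by auto
qed

lemma orbit_char:
  assumes z: "z \<in> VT"
  shows "{g z | g. g \<in> U} = {z' \<in> VT. key z' = key z}"
proof (intro equalityI subsetI)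
  fix x assume "x \<in> {g z | g. g \<in> U}"
  then obtain g where "g \<in> U" "x = g z" by blast
  then show "x \<in> {z' \<in> VT. key z' = key z}" using gVX key_inv z by simp
next
  fix z' assume "z' \<in> {z' \<in> VT. key z' = key z}"
  then have z': "z' \<in> VT" "key z' = key z" by auto
  show "z' \<in> {g z | g. g \<in> U}"
  proof (cases "z \<in> VX")
    case True
    then obtain \<tau> where t: "\<tau> \<in> N" "lab z' = \<tau> (lab z)" "z' \<in> VX" using key_trans_X[OF z z'] by blast
    have "compat (mkphi (\<lambda>x\<in>X. x) \<tau>) z' z"
      unfolding compat_def using z z' t True mkphi_Y[OF lab_Y[OF True]] by simp
    then obtain g where "g \<in> U" "g z = z'" using constructU[OF oneM t(1)] by blast
    then show ?thesis by blast
  next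
    case False
    then obtain \<sigma> where s: "\<sigma> \<in> M" "lab z' = \<sigma> (lab z)" "z' \<in> VY" "z \<in> VY" using key_trans_Y[OF z z'] by blast
    have "compat (mkphi \<sigma> (\<lambda>x\<in>Y. x)) z' z"
      unfolding compat_def using z z' s False partVY[OF s(3)] mkphi_X[OF lab_X[OF s(4)]] by simp
    then obtain g where "g \<in> U" "g z = z'" using constructU[OF s(1) oneN] by blast
    then show ?thesis by blast
  qed
qed

definition EOr where
  "EOr u w = {{u',w'} | u' w'. u' \<in> VX \<and> w' \<in> VY \<and> E u' w' \<and> key u' = key u \<and> key w' = key w}"

lemma VXT: "u \<in> VX \<Longrightarrow> u \<in> VT" using part by blast
lemma VYT: "u \<in> VY \<Longrightarrow> u \<in> VT" using part by blast

lemma edge_char: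
  assumes u: "u \<in> VX" and w: "w \<in> VY" and e: "E u w"
  shows "{g ` {u,w} | g. g \<in> U} = EOr u w"
proof (intro equalityI subsetI)
  fix x assume "x \<in> {g ` {u,w} | g. g \<in> U}"
  then obtain g where g: "g \<in> U" "x = g ` {u,w}" by blast
  have ta: "g \<in> tree_aut VT E" using g unfolding U_c_def by simp
  have gu: "g u \<in> VX" using gVX[OF g(1) VXT[OF u]] u by simp
  have gw: "g w \<in> VY" using gVX[OF g(1) VYT[OF w]] w partVY[OF w] part by blast
  have "E (g u) (g w)" using ta VXT[OF u] VYT[OF w] e unfolding tree_aut_def by blast
  moreover have "key (g u) = key u" "key (g w) = key w" using key_inv g(1) VXT[OF u] VYT[OF w] by auto
  ultimately show "x \<in> EOr u w" unfolding EOr_def using g(2) gu gw by auto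
next
  fix x assume "x \<in> EOr u w"
  then obtain u' w' where x: "x = {u',w'}" "u' \<in> VX" "w' \<in> VY" "E u' w'" "key u' = key u" "key w' = key w"
    unfolding EOr_def by blast
  obtain \<tau> where t: "\<tau> \<in> N" "lab u' = \<tau> (lab u)" using key_trans_X[OF VXT[OF u] VXT[OF x(2)] x(5) u] by blast
  obtain \<sigma> where s: "\<sigma> \<in> M" "lab w' = \<sigma> (lab w)"
    using key_trans_Y[OF VYT[OF w] VYT[OF x(3)] x(6) partVY[OF w]] by blast
  have "compat (mkphi \<sigma> \<tau>) u' u"
    unfolding compat_def using u x(2) VXT t(2) mkphi_Y[OF lab_Y[OF u]] by simp
  then obtain g where g: "g \<in> U" "g u = u'" "\<forall>a b. E a b \<longrightarrow> c (g a, g b) = mkphi \<sigma> \<tau> (c (a,b))"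
    using constructU[OF s(1) t(1)] by blast
  have ta: "g \<in> tree_aut VT E" using g unfolding U_c_def by simp
  have e': "E u' (g w)" using ta VXT[OF u] VYT[OF w] e g(2) unfolding tree_aut_def by blast
  have "c (u', g w) = mkphi \<sigma> \<tau> (c (u,w))" using g(2,3) e by metis
  also have "\<dots> = \<sigma> (lab w)" using lab_eq[OF e] mkphi_X[OF lab_X[OF w]] by simp
  also have "\<dots> = c (u', w')" using s(2) lab_eq[OF x(4)] by simp
  finally have "g w = w'" using cinj[OF e' x(4)] by simp
  then have "x = g ` {u,w}" using x(1) g(2) by simp
  then show "x \<in> {g ` {u,w} | g. g \<in> U}" using g(1) by blast
qed

lemma quot_edges_eq: "quot_edges U VT E = {EOr u w | u w. u \<in> VX \<and> w \<in> VY \<and> E u w}"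
proof (intro equalityI subsetI)
  fix x assume "x \<in> quot_edges U VT E"
  then obtain a b where ab: "a \<in> VT" "b \<in> VT" "E a b" "x = {g ` {a,b} | g. g \<in> U}"
    unfolding quot_edges_def tree_edges_def by blast
  show "x \<in> {EOr u w | u w. u \<in> VX \<and> w \<in> VY \<and> E u w}"
  proof (cases "a \<in> VX")
    case True
    then have bY: "b \<in> VY" using bip ab(3) by simp
    have "x = EOr a b" using edge_char[OF True bY ab(3)] ab(4) by simp
    then show ?thesis using True bY ab(3) by blast
  next
    case False
    then have a: "a \<in> VY" using ab(1) part by blast
    then have b: "b \<in> VX" using bip ab(3) ab(2) part by blast
    have "x = {g ` {b,a} | g. g \<in> U}" using ab(4) by (simp add: insert_commute)
    then have "x = EOr b a" using edge_char[OF b a Esym[OF ab(3)]] by simp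
    then show ?thesis using a b Esym[OF ab(3)] by blast
  qed
next
  fix x assume "x \<in> {EOr u w | u w. u \<in> VX \<and> w \<in> VY \<and> E u w}"
  then obtain u w where uw: "u \<in> VX" "w \<in> VY" "E u w" "x = EOr u w" by blast
  have "{u,w} \<in> tree_edges VT E" unfolding tree_edges_def using uw VXT VYT by blast
  moreover have "x = {g ` {u,w} | g. g \<in> U}" using edge_char[OF uw(1-3)] uw(4) by simp
  ultimately show "x \<in> quot_edges U VT E" unfolding quot_edges_def by (rule rev_image_eqI)
qed

definition Or where "Or z = {z' \<in> VT. key z' = key z}"

lemma quot_vertices_eq: "quot_vertices U VT = Or ` VT"
  unfolding quot_vertices_def perm_orbits_def
proof (rule image_cong[OF refl])
  fix z assume "z \<in> VT" then show "{g z | g. g \<in> U} = Or z" unfolding Or_def by (rule orbit_char)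
qed

lemma Or_eq: "z \<in> VT \<Longrightarrow> z' \<in> VT \<Longrightarrow> Or z = Or z' \<longleftrightarrow> key z = key z'"
proof -
  assume z: "z \<in> VT" "z' \<in> VT"
  show ?thesis
  proof
    assume "Or z = Or z'"
    moreover have "z \<in> Or z" using z unfolding Or_def by simp
    ultimately have "z \<in> Or z'" by simp
    then show "key z = key z'" unfolding Or_def by simp
  next
    assume "key z = key z'" then show "Or z = Or z'" unfolding Or_def by simp
  qed
qed

lemma inc_char:
  assumes u: "u \<in> VX" and w: "w \<in> VY" and e: "E u w" and z: "z \<in> VT"
  shows "quot_incident (EOr u w) (Or z) \<longleftrightarrow> key z = key u \<or> key z = key w"
proof
  assume "quot_incident (EOr u w) (Or z)"
  then obtain x where x: "x \<in> EOr u w" "x \<inter> Or z \<noteq> {}" unfolding quot_incident_def by blast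
  from x(1) have "\<exists>u' w'. x = {u',w'} \<and> u' \<in> VX \<and> w' \<in> VY \<and> E u' w' \<and> key u' = key u \<and> key w' = key w"
    unfolding EOr_def by (simp only: mem_Collect_eq)
  then obtain u' w' where xx: "x = {u',w'}" and k: "key u' = key u" "key w' = key w" by blast
  obtain y where y: "y \<in> x" "y \<in> Or z" using x(2) by blast
  have "y = u' \<or> y = w'" using y(1) xx by simp
  moreover have "key y = key z" using y(2) unfolding Or_def by simp
  ultimately show "key z = key u \<or> key z = key w" using k by metis
next
  assume k: "key z = key u \<or> key z = key w"
  have i1: "{u,w} \<in> EOr u w" unfolding EOr_def mem_Collect_eq
    by (intro exI[of _ u] exI[of _ w]) (simp add: u w e)
  have "u \<in> Or z \<or> w \<in> Or z" using k VXT[OF u] VYT[OF w] unfolding Or_def by auto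
  then have i2: "{u,w} \<inter> Or z \<noteq> {}" by blast
  show "quot_incident (EOr u w) (Or z)" unfolding quot_incident_def
    by (rule bexI[where P="\<lambda>e. e \<inter> Or z \<noteq> {}" and x="{u,w}", OF i2 i1])
qed

lemma exVX: "\<exists>v. v \<in> VX"
proof -
  obtain v where v: "v \<in> VT" using VTne by blast
  show ?thesis
  proof (cases "v \<in> VX")
    case False
    then have "v \<in> VY" using v part by blast
    moreover obtain u where "E u v" using hasnb v by blast
    ultimately show ?thesis using bip by blast
  qed blast
qed

lemma exVY: "\<exists>v. v \<in> VY"
proof -
  obtain v where v: "v \<in> VX" using exVX by blast
  obtain k where "k \<in> S v" using Sne by blast
  then obtain w where "E v w" using csurj VXT[OF v] by blast
  then show ?thesis using bip v by blast
qed

lemma labY_surj: "x \<in> X \<Longrightarrow> \<exists>w\<in>VY. lab w = x"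
proof -
  assume x: "x \<in> X"
  obtain v where v: "v \<in> VX" using exVX by blast
  then have "x \<in> S v" using x S_def by simp
  then obtain w where w: "E v w" "c (v,w) = x" using csurj VXT[OF v] by blast
  then show ?thesis using bip v lab_eq by blast
qed

lemma labX_surj: "y \<in> Y \<Longrightarrow> \<exists>u\<in>VX. lab u = y"
proof -
  assume y: "y \<in> Y"
  obtain v where v: "v \<in> VY" using exVY by blast
  then have "y \<in> S v" using y S_def partVY by simp
  then obtain w where w: "E v w" "c (v,w) = y" using csurj VYT[OF v] by blast
  have "w \<notin> VY" using bip[OF w(1)] v partVY by blast
  then have "w \<in> VX" using Ein(2)[OF w(1)] partVX by blast
  then show ?thesis using w lab_eq by blast
qed

lemma eqP: "Or ` VY \<approx> perm_orbits M X"
proof -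
  have po: "perm_orbits M X = OM ` X" unfolding perm_orbits_def OM_def by simp
  let ?f = "\<lambda>Ob. {z \<in> VT. key z = (False, Ob)}"
  have fw: "?f (OM (lab w)) = Or w" if "w \<in> VY" for w
  proof -
    have "key w = (False, OM (lab w))" using that partVY unfolding key_def by simp
    then show ?thesis unfolding Or_def by simp
  qed
  have inj: "inj_on ?f (OM ` X)"
  proof (rule inj_onI)
    fix O1 O2 assume o: "O1 \<in> OM ` X" "O2 \<in> OM ` X" "?f O1 = ?f O2"
    then obtain x1 where x1: "x1 \<in> X" "O1 = OM x1" by blast
    obtain w where w: "w \<in> VY" "lab w = x1" using labY_surj[OF x1(1)] by blast
    have "w \<in> ?f O1" using w x1 partVY VYT unfolding key_def by simp
    then have "w \<in> ?f O2" using o(3) by simp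
    then show "O1 = O2" using w x1 partVY unfolding key_def by simp
  qed
  have im: "?f ` (OM ` X) = Or ` VY"
  proof (intro equalityI subsetI)
    fix x assume "x \<in> ?f ` (OM ` X)"
    then obtain y where y: "y \<in> X" "x = ?f (OM y)" by blast
    obtain w where w: "w \<in> VY" "lab w = y" using labY_surj[OF y(1)] by blast
    show "x \<in> Or ` VY" using fw[OF w(1)] w y by simp
  next
    fix x assume "x \<in> Or ` VY"
    then obtain w where w: "w \<in> VY" "x = Or w" by blast
    have "OM (lab w) \<in> OM ` X" using lab_X[OF w(1)] by (rule imageI)
    then have "?f (OM (lab w)) \<in> ?f ` (OM ` X)" by (rule imageI)
    then show "x \<in> ?f ` (OM ` X)" using fw[OF w(1)] w(2) by simp
  qed
  have "bij_betw ?f (perm_orbits M X) (Or ` VY)" unfolding bij_betw_def using inj im po by simp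
  then have "perm_orbits M X \<approx> Or ` VY" unfolding eqpoll_def by (rule exI[of _ ?f])
  then show ?thesis by (rule eqpoll_sym)
qed

lemma eqQ: "Or ` VX \<approx> perm_orbits N Y"
proof -
  have po: "perm_orbits N Y = ON ` Y" unfolding perm_orbits_def ON_def by simp
  let ?f = "\<lambda>Ob. {z \<in> VT. key z = (True, Ob)}"
  have fw: "?f (ON (lab w)) = Or w" if "w \<in> VX" for w
  proof -
    have "key w = (True, ON (lab w))" using that partVY unfolding key_def by simp
    then show ?thesis unfolding Or_def by simp
  qed
  have inj: "inj_on ?f (ON ` Y)"
  proof (rule inj_onI)
    fix O1 O2 assume o: "O1 \<in> ON ` Y" "O2 \<in> ON ` Y" "?f O1 = ?f O2"
    then obtain x1 where x1: "x1 \<in> Y" "O1 = ON x1" by blast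
    obtain w where w: "w \<in> VX" "lab w = x1" using labX_surj[OF x1(1)] by blast
    have "w \<in> ?f O1" using w x1 VXT unfolding key_def by simp
    then have "w \<in> ?f O2" using o(3) by simp
    then show "O1 = O2" using w x1 unfolding key_def by simp
  qed
  have im: "?f ` (ON ` Y) = Or ` VX"
  proof (intro equalityI subsetI)
    fix x assume "x \<in> ?f ` (ON ` Y)"
    then obtain y where y: "y \<in> Y" "x = ?f (ON y)" by blast
    obtain w where w: "w \<in> VX" "lab w = y" using labX_surj[OF y(1)] by blast
    show "x \<in> Or ` VX" using fw[OF w(1)] w y by simp
  next
    fix x assume "x \<in> Or ` VX"
    then obtain w where w: "w \<in> VX" "x = Or w" by blast
    have "ON (lab w) \<in> ON ` Y" using lab_Y[OF w(1)] by (rule imageI)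
    then have "?f (ON (lab w)) \<in> ?f ` (ON ` Y)" by (rule imageI)
    then show "x \<in> ?f ` (ON ` Y)" using fw[OF w(1)] w(2) by simp
  qed
  have "bij_betw ?f (perm_orbits N Y) (Or ` VX)" unfolding bij_betw_def using inj im po by simp
  then have "perm_orbits N Y \<approx> Or ` VX" unfolding eqpoll_def by (rule exI[of _ ?f])
  then show ?thesis by (rule eqpoll_sym)
qed

theorem main:
  "is_K (quot_vertices U VT) (quot_edges U VT E) quot_incident (perm_orbits M X) (perm_orbits N Y)"
  unfolding is_K_def
proof (intro exI conjI)
  let ?V = "quot_vertices U VT" and ?Ed = "quot_edges U VT E"
  let ?P = "Or ` VY" and ?Q = "Or ` VX"
  show "?P \<approx> perm_orbits M X" by (rule eqP)
  show "?Q \<approx> perm_orbits N Y" by (rule eqQ)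
  have V: "?V = Or ` VT" by (rule quot_vertices_eq)
  have Ed: "?Ed = {EOr u w | u w. u \<in> VX \<and> w \<in> VY \<and> E u w}" by (rule quot_edges_eq)
  show "complete_bipartite_on ?V ?Ed quot_incident ?P ?Q"
    unfolding complete_bipartite_on_def
  proof (intro conjI ballI)
    have "?P \<union> ?Q = Or ` (VY \<union> VX)" by (simp add: image_Un)
    also have "VY \<union> VX = VT" using part(1) by (simp add: Un_commute)
    finally show "?P \<union> ?Q = ?V" using V by simp
    show "?P \<inter> ?Q = {}"
    proof (rule ccontr)
      assume "?P \<inter> ?Q \<noteq> {}"
      then obtain x where "x \<in> ?P" "x \<in> ?Q" by blast
      then obtain w u where "w \<in> VY" "u \<in> VX" "Or w = Or u" by blast
      then have "key w = key u" using Or_eq[OF VYT VXT] by blast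
      then show False using \<open>w \<in> VY\<close> \<open>u \<in> VX\<close> partVY unfolding key_def by (auto split: if_splits)
    qed
  next
    fix eo assume "eo \<in> ?Ed"
    then have "eo \<in> {EOr u w | u w. u \<in> VX \<and> w \<in> VY \<and> E u w}" using Ed by simp
    then have "\<exists>u w. eo = EOr u w \<and> u \<in> VX \<and> w \<in> VY \<and> E u w" by (simp only: mem_Collect_eq)
    then obtain u w where uw: "u \<in> VX" "w \<in> VY" "E u w" "eo = EOr u w" by blast
    have "{x \<in> ?V. quot_incident eo x} = {Or w, Or u}"
    proof (intro equalityI subsetI)
      fix x assume "x \<in> {x \<in> ?V. quot_incident eo x}"
      then have xV: "x \<in> Or ` VT" and xi: "quot_incident eo x" using V by simp_all
      from xV obtain z where z0: "z \<in> VT" "x = Or z" by (rule imageE)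
      have z: "z \<in> VT" "x = Or z" "quot_incident eo (Or z)" using z0 xi by simp_all
      then have "key z = key u \<or> key z = key w" using inc_char[OF uw(1-3) z(1)] uw(4) by simp
      then have "Or z = Or u \<or> Or z = Or w" using Or_eq[OF z(1) VXT[OF uw(1)]] Or_eq[OF z(1) VYT[OF uw(2)]] by simp
      then show "x \<in> {Or w, Or u}" using z(2) by blast
    next
      fix x assume x: "x \<in> {Or w, Or u}"
      have "quot_incident eo (Or w)" "quot_incident eo (Or u)"
        using inc_char[OF uw(1-3) VYT[OF uw(2)]] inc_char[OF uw(1-3) VXT[OF uw(1)]] uw(4) by simp_all
      moreover have "Or w \<in> ?V" "Or u \<in> ?V" using V VXT[OF uw(1)] VYT[OF uw(2)] by simp_all
      ultimately show "x \<in> {x \<in> ?V. quot_incident eo x}" using x by auto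
    qed
    moreover have "Or w \<in> ?P" "Or u \<in> ?Q" using uw(1,2) by simp_all
    ultimately show "\<exists>p\<in>?P. \<exists>q\<in>?Q. {x \<in> ?V. quot_incident eo x} = {p, q}" by blast
  next
    fix p q assume pq: "p \<in> ?P" "q \<in> ?Q"
    then obtain w0 u0 where w0: "w0 \<in> VY" "p = Or w0" and u0: "u0 \<in> VX" "q = Or u0" by blast
    have "lab w0 \<in> S u0" using lab_X[OF w0(1)] u0 S_def by simp
    then obtain w where w: "E u0 w" "c (u0,w) = lab w0" using csurj VXT[OF u0(1)] by blast
    have wY: "w \<in> VY" using bip w(1) u0(1) by simp
    have kw: "key w = key w0" using lab_eq[OF w(1)] w(2) wY w0(1) partVY unfolding key_def by simp
    show "\<exists>!e. e \<in> ?Ed \<and> quot_incident e p \<and> quot_incident e q"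
    proof (rule ex1I[of _ "EOr u0 w"])
      have "EOr u0 w \<in> ?Ed" unfolding Ed mem_Collect_eq
        by (intro exI[of _ u0] exI[of _ w]) (simp add: u0(1) wY w(1))
      moreover have "quot_incident (EOr u0 w) p"
        using inc_char[OF u0(1) wY w(1) VYT[OF w0(1)]] w0(2) kw by simp
      moreover have "quot_incident (EOr u0 w) q"
        using inc_char[OF u0(1) wY w(1) VXT[OF u0(1)]] u0(2) by simp
      ultimately show "EOr u0 w \<in> ?Ed \<and> quot_incident (EOr u0 w) p \<and> quot_incident (EOr u0 w) q" by simp
    next
      fix e assume e: "e \<in> ?Ed \<and> quot_incident e p \<and> quot_incident e q"
      then have "e \<in> {EOr u w | u w. u \<in> VX \<and> w \<in> VY \<and> E u w}" using Ed by simp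
      then have "\<exists>u' w'. e = EOr u' w' \<and> u' \<in> VX \<and> w' \<in> VY \<and> E u' w'" by (simp only: mem_Collect_eq)
      then obtain u' w' where uw: "u' \<in> VX" "w' \<in> VY" "E u' w'" "e = EOr u' w'" by blast
      have k1: "key w0 = key u' \<or> key w0 = key w'" using inc_char[OF uw(1-3) VYT[OF w0(1)]] e uw(4) w0(2) by simp
      have k2: "key u0 = key u' \<or> key u0 = key w'" using inc_char[OF uw(1-3) VXT[OF u0(1)]] e uw(4) u0(2) by simp
      have fX: "fst (key z) \<longleftrightarrow> z \<in> VX" if "z \<in> VT" for z using key_X[OF that] .
      have "key w0 \<noteq> key u'" using fX[OF VYT[OF w0(1)]] fX[OF VXT[OF uw(1)]] partVY[OF w0(1)] uw(1) by auto
      then have "key w' = key w0" using k1 by simp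
      moreover have "key u0 \<noteq> key w'" using fX[OF VYT[OF uw(2)]] fX[OF VXT[OF u0(1)]] partVY[OF uw(2)] u0(1) by auto
      then have "key u' = key u0" using k2 by simp
      ultimately show "e = EOr u0 w" using uw(4) kw unfolding EOr_def by simp
    qed
  qed
qed

end

theorem lemma4p4:
  fixes X Y :: "'c set"
    and M N :: "('c \<Rightarrow> 'c) set"
    and VT VX VY :: "'v set"
    and E :: "'v \<Rightarrow> 'v \<Rightarrow> bool"
    and c :: "'v \<times> 'v \<Rightarrow> 'c"
  assumes "X \<inter> Y = {}"
    and "\<exists>x\<in>X. \<exists>x'\<in>X. x \<noteq> x'"
    and "\<exists>y\<in>Y. \<exists>y'\<in>Y. y \<noteq> y'"
    and "subgroup M (BijGroup X)" and "M \<noteq> {\<one>\<^bsub>BijGroup X\<^esub>}"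
    and "subgroup N (BijGroup Y)" and "N \<noteq> {\<one>\<^bsub>BijGroup Y\<^esub>}"
    and "biregular_tree VT E VX VY X Y"
    and "legal_colouring VT E VX VY X Y c"
  shows "is_K (quot_vertices (U_c VT E VX VY X Y c M N) VT)
              (quot_edges (U_c VT E VX VY X Y c M N) VT E)
              quot_incident
              (perm_orbits M X) (perm_orbits N Y)"
  proof -
  have Xne: "X \<noteq> {}" using assms(2) by blast
  have Yne: "Y \<noteq> {}" using assms(3) by blast
  interpret T: TS VT VX VY E X Y c M N
    by (rule TS.intro) (simp_all add: assms Xne Yne)
  show ?thesis using T.main .
qed

end
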